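(* (i) For all $n,k\in\mathbb N$, $\binom{n}{k}=l_{n,k}+2l_{n,k+1}$. (ii) For all $n\in\mathbb N$, the polynomial identity $x^n=(-1)^n+(x+1)\sum_{k=1}^nl_{n,k}(x-1)^{k-1}$ holds.
   Context: For $i,j\in\mathbb N$, $l_{i,j}=\sum_{k=0}^{i-j}\binom{\frac{i-1}{2}+y-k}{k}\binom{\frac{i-1}{2}+k-y}{i-j-k}$, where $\binom{z}{k}=\frac{z(z-1)\cdots(z-k+1)}{k!}$; this sum is a polynomial in the auxiliary variable $y$ which is constant in $y$, so $l_{i,j}$ is a well-defined number (e.g. its value at $y=0$). In particular $l_{i,j}=0$ for $j>i$ (empty sum). These numbers form a Pascal-like triangle starting with rows $1$; $-1,1$; $1,0,1$; $-1,1,1,1$; $1,0,2,2,1$. *)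

theory Defs
  imports "HOL-Computational_Algebra.Polynomial"
begin

definition l_poly :: "nat \<Rightarrow> nat \<Rightarrow> real \<Rightarrow> real" where
  "l_poly i j y = (if j > i then 0 else
     (\<Sum>k=0..i-j. ((real i - 1) / 2 + y - real k gchoose k)
                 * ((real i - 1) / 2 + real k - y gchoose (i - j - k))))"

text \<open>l_{i,j}: the (y-independent) value, taken at y = 0.\<close>
definition l :: "nat \<Rightarrow> nat \<Rightarrow> real" where
  "l i j = l_poly i j 0"

end

theory Submission
  imports Defs
begin

definition FF :: "real \<Rightarrow> real \<Rightarrow> nat \<Rightarrow> real" where
  "FF N M m = (\<Sum>k\<le>m. ((N - real k) gchoose k) * ((M + real k) gchoose (m - k)))"

definition cc :: "nat \<Rightarrow> nat \<Rightarrow> real" where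
  "cc n m = (\<Sum>i\<le>m. real (n choose i) * (-2) ^ (m - i))"

lemma cc0: "cc n 0 = 1" by (simp add: cc_def)

lemma cc_rec: "cc (Suc n) (Suc m) = cc n (Suc m) + cc n m"
proof -
  have "cc (Suc n) (Suc m) = (-2)^(Suc m) + (\<Sum>i\<le>m. real (Suc n choose Suc i) * (-2) ^ (m - i))"
    unfolding cc_def by (subst sum.atMost_Suc_shift) simp
  also have "\<dots> = (-2)^(Suc m) + (\<Sum>i\<le>m. real (n choose Suc i) * (-2) ^ (m - i))
       + (\<Sum>i\<le>m. real (n choose i) * (-2) ^ (m - i))"
    by (simp add: sum.distrib algebra_simps)
  also have "(-2)^(Suc m) + (\<Sum>i\<le>m. real (n choose Suc i) * (-2) ^ (m - i)) = cc n (Suc m)"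
    unfolding cc_def by (subst sum.atMost_Suc_shift) simp
  finally show ?thesis by (simp add: cc_def)
qed

lemma cc_step: "cc n (Suc m) = real (n choose Suc m) - 2 * cc n m"
proof -
  have "cc n (Suc m) = (\<Sum>i\<le>m. real (n choose i) * (-2) ^ (Suc m - i)) + real (n choose Suc m)"
    unfolding cc_def by simp
  also have "(\<Sum>i\<le>m. real (n choose i) * (-2) ^ (Suc m - i)) = - 2 * cc n m"
    unfolding cc_def sum_distrib_left
    by (rule sum.cong) (auto simp: Suc_diff_le)
  finally show ?thesis by simp
qed

lemma cc_nn: "cc n n = (-1) ^ n"
proof -
  have "(1 + (-2::real)) ^ n = (\<Sum>k\<le>n. of_nat (n choose k) * 1 ^ k * (-2) ^ (n - k))"
    by (rule binomial_ring)
  then show ?thesis by (simp add: cc_def)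
qed

lemma FF0: "FF N M 0 = 1" by (simp add: FF_def)

lemma FF_rec: "FF N M (Suc m) = FF N (M - 1) (Suc m) + FF N (M - 1) m"
proof -
  have "FF N M (Suc m) = (\<Sum>k\<le>m. ((N - real k) gchoose k) * ((M + real k) gchoose (Suc (m - k))))
          + ((N - real (Suc m)) gchoose Suc m)"
    unfolding FF_def by (simp add: Suc_diff_le)
  also have "(\<Sum>k\<le>m. ((N - real k) gchoose k) * ((M + real k) gchoose (Suc (m - k))))
     = (\<Sum>k\<le>m. ((N - real k) gchoose k) * ((M - 1 + real k) gchoose (Suc (m - k))))
       + (\<Sum>k\<le>m. ((N - real k) gchoose k) * ((M - 1 + real k) gchoose (m - k)))"
  proof -
    have "\<And>k. (M + real k) gchoose (Suc (m - k)) = ((M - 1 + real k) gchoose (m - k)) + ((M - 1 + real k) gchoose (Suc (m - k)))"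
      using gbinomial_Suc_Suc[of "M - 1 + real k" for k] by simp
    then show ?thesis by (simp add: sum.distrib algebra_simps)
  qed
  finally show ?thesis unfolding FF_def by (simp add: Suc_diff_le)
qed

lemma GG: "n \<le> r \<Longrightarrow> (\<Sum>k\<le>n. (-1)^k * real (n choose k) * ((N - real k) gchoose r)) = ((N - real n) gchoose (r - n))"
proof (induction n arbitrary: N r)
  case 0 then show ?case by simp
next
  case (Suc n)
  obtain r' where r: "r = Suc r'" using Suc.prems by (cases r) auto
  define f where "f = (\<lambda>k::nat. (N - real k) gchoose r)"
  have "(\<Sum>k\<le>Suc n. (-1)^k * real (Suc n choose k) * f k)
     = f 0 + (\<Sum>i\<le>n. (-1)^(Suc i) * real (Suc n choose Suc i) * f (Suc i))"
    by (subst sum.atMost_Suc_shift) simp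
  also have "\<dots> = f 0 + (\<Sum>i\<le>n. (-1)^(Suc i) * real (n choose Suc i) * f (Suc i))
      + (\<Sum>i\<le>n. (-1)^(Suc i) * real (n choose i) * f (Suc i))"
  proof -
    have eq: "\<And>i. (-1)^(Suc i) * real (Suc n choose Suc i) * f (Suc i)
        = (-1)^(Suc i) * real (n choose Suc i) * f (Suc i) + (-1)^(Suc i) * real (n choose i) * f (Suc i)"
      by (simp add: algebra_simps)
    show ?thesis by (simp only: eq sum.distrib add.assoc)
  qed
  also have "f 0 + (\<Sum>i\<le>n. (-1)^(Suc i) * real (n choose Suc i) * f (Suc i))
      = (\<Sum>k\<le>Suc n. (-1)^k * real (n choose k) * f k)"
    by (subst sum.atMost_Suc_shift) simp
  also have "\<dots> = (\<Sum>k\<le>n. (-1)^k * real (n choose k) * f k)" by simp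
  finally have A0: "(\<Sum>k\<le>Suc n. (-1)^k * real (Suc n choose k) * f k)
     = (\<Sum>k\<le>n. (-1)^k * real (n choose k) * f k) + (\<Sum>i\<le>n. (-1)^(Suc i) * real (n choose i) * f (Suc i))" .
  have S2: "(\<Sum>i\<le>n. (-1)^(Suc i) * real (n choose i) * f (Suc i))
     = - (\<Sum>k\<le>n. (-1)^k * real (n choose k) * ((N - 1 - real k) gchoose r))"
    unfolding sum_negf[symmetric] by (rule sum.cong) (simp_all add: f_def algebra_simps)
  have A: "(\<Sum>k\<le>Suc n. (-1)^k * real (Suc n choose k) * ((N - real k) gchoose r))
     = (\<Sum>k\<le>n. (-1)^k * real (n choose k) * ((N - real k) gchoose r))
       - (\<Sum>k\<le>n. (-1)^k * real (n choose k) * ((N - 1 - real k) gchoose r))"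
    using A0 unfolding S2 by (simp add: f_def)
  have nr: "n \<le> r" using Suc.prems by simp
  have rn: "r - n = Suc (r - Suc n)" using Suc.prems by simp
  have C: "(N - real n) gchoose (r - n) = ((N - 1 - real n) gchoose (r - Suc n)) + ((N - 1 - real n) gchoose (r - n))"
    unfolding rn using gbinomial_Suc_Suc[of "N - 1 - real n" "r - Suc n"] by simp
  show ?case unfolding A Suc.IH[OF nr, of N] Suc.IH[OF nr, of "N - 1"] C
    by (simp add: algebra_simps)
qed

lemma FF_top: assumes "N + M = real n - 1" shows "FF N M n = (-1) ^ n"
proof -
  have t: "((N - real k) gchoose k) * ((M + real k) gchoose (n - k))
      = (-1)^n * ((-1)^k * real (n choose k) * ((N - real k) gchoose n))" if "k \<le> n" for k
  proof -
    have "(M + real k) gchoose (n - k) = (-1)^(n-k) * ((of_nat (n - k) - (M + real k) - 1) gchoose (n - k))"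
      by (rule gbinomial_negated_upper)
    also have "of_nat (n - k) - (M + real k) - 1 = (N - real k) - real k"
      using that assms by (simp add: of_nat_diff)
    finally have 1: "(M + real k) gchoose (n - k) = (-1)^(n-k) * (((N - real k) - real k) gchoose (n - k))" .
    have 2: "((N - real k) gchoose n) * (real n gchoose k) = ((N - real k) gchoose k) * (((N - real k) - real k) gchoose (n - k))"
      using gbinomial_trinomial_revision[OF that, of "N - real k"] by (simp only:)
    have 3: "(-1::real)^(n-k) = (-1)^n * (-1)^k"
    proof -
      have "(-1::real)^n = (-1)^(n-k) * (-1)^k" using that by (simp add: power_add[symmetric])
      then have "(-1::real)^n * (-1)^k = (-1)^(n-k) * ((-1)^k * (-1)^k)" by simp
      also have "(-1::real)^k * (-1)^k = 1" by (simp add: power_add[symmetric] flip: power_mult_distrib)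
      finally show ?thesis by simp
    qed
    have "((N - real k) gchoose k) * ((M + real k) gchoose (n - k))
        = (-1)^(n-k) * (((N - real k) gchoose k) * (((N - real k) - real k) gchoose (n - k)))"
      unfolding 1 by (simp only: mult_ac)
    also have "\<dots> = (-1)^(n-k) * (((N - real k) gchoose n) * (real n gchoose k))" by (simp only: 2)
    also have "\<dots> = (-1)^n * ((-1)^k * real (n choose k) * ((N - real k) gchoose n))"
      unfolding 3 binomial_gbinomial by (simp only: mult_ac)
    finally show ?thesis .
  qed
  have "FF N M n = (\<Sum>k\<le>n. (-1)^n * ((-1)^k * real (n choose k) * ((N - real k) gchoose n)))"
    unfolding FF_def by (rule sum.cong) (simp_all add: t)
  also have "\<dots> = (-1)^n" by (simp add: sum_distrib_left[symmetric] GG)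
  finally show ?thesis .
qed

lemma FF_cc: "N + M = real n - 1 \<Longrightarrow> m \<le> n \<Longrightarrow> FF N M m = cc n m"
proof (induction n arbitrary: N M m)
  case 0 then show ?case by (simp add: FF0 cc0)
next
  case (Suc n)
  show ?case
  proof (cases "m = Suc n")
    case True then show ?thesis using FF_top[OF Suc.prems(1)] by (simp add: cc_nn)
  next
    case False
    show ?thesis
    proof (cases m)
      case 0 then show ?thesis by (simp add: FF0 cc0)
    next
      case (Suc m')
      have h: "N + (M - 1) = real n - 1" using Suc.prems by simp
      have mn: "m \<le> n" "m' \<le> n" using False Suc.prems Suc by auto
      show ?thesis unfolding Suc FF_rec[of N M m'] cc_rec
        using Suc.IH[OF h mn(1)] Suc.IH[OF h mn(2)] Suc by simp
    qed
  qed
qed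

lemma l_cc: "j \<le> n \<Longrightarrow> l n j = cc n (n - j)"
proof -
  assume j: "j \<le> n"
  have "l n j = FF ((real n - 1)/2) ((real n - 1)/2) (n - j)"
    using j unfolding l_def l_poly_def FF_def by (simp add: atLeast0AtMost)
  also have "\<dots> = cc n (n - j)" by (rule FF_cc) auto
  finally show ?thesis .
qed

lemma l_big: "n < j \<Longrightarrow> l n j = 0" by (simp add: l_def l_poly_def)

lemma part1: "real (n choose k) = l n k + 2 * l n (k + 1)"
proof (cases "k < n")
  case True
  then have e: "n - k = Suc (n - (k+1))" by simp
  have "l n k + 2 * l n (k + 1) = cc n (Suc (n - (k+1))) + 2 * cc n (n - (k+1))"
    using True e by (simp add: l_cc)
  also have "\<dots> = real (n choose (n - k))" by (simp add: cc_step e)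
  also have "\<dots> = real (n choose k)" using True by (simp add: binomial_symmetric[symmetric])
  finally show ?thesis by simp
next
  case False
  then show ?thesis by (cases "k = n") (auto simp: l_big l_cc cc0)
qed


lemma part2_real: "(x::real) ^ n = (-1) ^ n + (1 + x) * (\<Sum>k=1..n. l n k * (x - 1) ^ (k - 1))"
proof -
  define t where "t = x - 1"
  have x: "x = t + 1" by (simp add: t_def)
  have s1: "(\<Sum>k=1..n. l n k * t ^ (k - 1)) = (\<Sum>k\<le>n. l n (k+1) * t ^ k)"
  proof -
    have "(\<Sum>k=1..n. l n k * t ^ (k - 1)) = (\<Sum>k<n. l n (Suc k) * t ^ k)"
      using sum.atLeast1_atMost_eq[of "\<lambda>k. l n k * t ^ (k - 1)" n] by simp
    also have "\<dots> = (\<Sum>k\<le>n. l n (k+1) * t ^ k)"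
      by (simp add: lessThan_Suc_atMost[symmetric] l_big)
    finally show ?thesis .
  qed
  have s2: "(\<Sum>k=1..n. l n k * t ^ k) = (\<Sum>k\<le>n. l n k * t ^ k) - l n 0"
  proof -
    have "(\<Sum>k\<le>n. l n k * t ^ k) = l n 0 + (\<Sum>k=Suc 0..n. l n k * t ^ k)"
      unfolding atMost_atLeast0 by (subst sum.head) (auto simp: atLeastSucAtMost_greaterThanAtMost)
    then show ?thesis by simp
  qed
  have l0: "l n 0 = (-1) ^ n" using l_cc[of 0 n] cc_nn by simp
  have "(1 + x) * (\<Sum>k=1..n. l n k * (x - 1) ^ (k - 1))
      = (\<Sum>k=1..n. l n k * t ^ k) + 2 * (\<Sum>k=1..n. l n k * t ^ (k - 1))"
  proof -
    have "(1 + x) * (\<Sum>k=1..n. l n k * (x - 1) ^ (k - 1)) = (\<Sum>k=1..n. (t + 2) * (l n k * t ^ (k - 1)))"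
      by (simp add: sum_distrib_left x add.commute)
    also have "\<dots> = (\<Sum>k=1..n. l n k * t ^ k + 2 * (l n k * t ^ (k - 1)))"
    proof (rule sum.cong)
      fix k assume "k \<in> {1..n}"
      then have "t ^ k = t * t ^ (k - 1)" by (cases k) auto
      then show "(t + 2) * (l n k * t ^ (k - 1)) = l n k * t ^ k + 2 * (l n k * t ^ (k - 1))"
        by (simp add: algebra_simps)
    qed simp
    finally show ?thesis by (simp add: sum.distrib sum_distrib_left)
  qed
  also have "\<dots> = (\<Sum>k\<le>n. (l n k + 2 * l n (k+1)) * t ^ k) - l n 0"
    unfolding s1 s2 by (simp add: sum.distrib sum_distrib_left algebra_simps)
  also have "\<dots> = (\<Sum>k\<le>n. real (n choose k) * t ^ k) - (-1) ^ n"
    using part1[of n] by (simp add: l0)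
  also have "(\<Sum>k\<le>n. real (n choose k) * t ^ k) = (t + 1) ^ n"
    using binomial_ring[of t 1 n] by (simp add: add.commute)
  finally show ?thesis by (simp add: x)
qed

theorem proposition4p7:
  shows "(\<forall>n k::nat. real (n choose k) = l n k + 2 * l n (k + 1))
       \<and> (\<forall>n::nat. [:0, 1::real:] ^ n
             = [:(-1) ^ n:] + [:1, 1:] * (\<Sum>k=1..n. smult (l n k) ([:-1, 1:] ^ (k - 1))))"
proof (intro conjI allI)
  fix n k :: nat show "real (n choose k) = l n k + 2 * l n (k + 1)" by (rule part1)
next
  fix n :: nat
  show "[:0, 1::real:] ^ n
             = [:(-1) ^ n:] + [:1, 1:] * (\<Sum>k=1..n. smult (l n k) ([:-1, 1:] ^ (k - 1)))"
    unfolding poly_eq_poly_eq_iff[symmetric]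
  proof
    fix x :: real
    show "poly ([:0, 1::real:] ^ n) x = poly ([:(-1) ^ n:] + [:1, 1:] * (\<Sum>k=1..n. smult (l n k) ([:-1, 1:] ^ (k - 1)))) x"
      using part2_real[of x n] by (simp add: poly_sum algebra_simps)
  qed
qed

end
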